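(* Let $g$ be a positive integer, let $l\ge1$, and let $(a,a+g)$ be a consecutive prospective prime pair with gap $g$ in $S_l$. Let $k>l+4$, $0\le m\le P_{k-1}-1$ and $0\le m'\le P_k-1$. Then the number of tuples $(m_{l+1},\dots,m_k)$ of integers with $0\le m_j\le P_j-1$, $m_{k-1}=m$ and $m_k=m'$ such that, with $M=\sum_{j=l+1}^km_jP_{j-1}\#$, both $a+M$ and $a+g+M$ are coprime to $P_k\#$ (i.e. the number of pairs with gap $g$ in the subset $S_k^{(m')}$ generated from the pairs derived from $(a,a+g)$ in the subset $S_{k-1}^{(m)}$) is at least $(P_{k-2}-6)\,\mathring{n}^g_{k-3}$.
   Context: $P_k$ denotes the $k$-th prime ($P_1=2$), $P_k\#=\prod_{i=1}^kP_i$. $S_k=\{N\in\mathbb{N}:5\le N\le4+P_k\#\}$, $S_k^{(m)}=\{N:5+mP_{k-1}\#\le N\le4+(m+1)P_{k-1}\#\}$ for $0\le m\le P_k-1$. A prospective prime in $S_k$ is an $N\in S_k$ coprime to $P_k\#$; prospective primes $a<b$ in $S_k$ are consecutive if no integer strictly between them is coprime to $P_k\#$; a consecutive prospective prime pair with gap $g$ is a pair $(a,a+g)$ of consecutive prospective primes. For $j>l$, $\mathring{n}^g_j=\prod_{i=l+1}^{j}(P_i-2)\prod_{l+1\le i\le j,\,P_i\mid g}\frac{P_i-1}{P_i-2}$. *)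

theory Defs
  imports Complex_Main "HOL-Computational_Algebra.Primes" "HOL-Library.Infinite_Set"
begin

text \<open>P k is the k-th prime, 1-indexed: P 1 = 2, P 2 = 3, ...\<close>
definition P :: "nat \<Rightarrow> nat" where
  "P k = enumerate {p::nat. prime p} (k - 1)"

definition primorial :: "nat \<Rightarrow> nat" where
  "primorial k = (\<Prod>i\<in>{1..k}. P i)"

definition S :: "nat \<Rightarrow> nat set" where
  "S k = {N. 5 \<le> N \<and> N \<le> 4 + primorial k}"

definition prospective_prime :: "nat \<Rightarrow> nat \<Rightarrow> bool" where
  "prospective_prime k N \<longleftrightarrow> N \<in> S k \<and> coprime N (primorial k)"

definition cons_pair :: "nat \<Rightarrow> nat \<Rightarrow> nat \<Rightarrow> bool" where
  "cons_pair k g a \<longleftrightarrow> prospective_prime k a \<and> prospective_prime k (a + g) \<and> 0 < g \<and>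
     (\<forall>n. a < n \<and> n < a + g \<longrightarrow> \<not> coprime n (primorial k))"

definition nring :: "nat \<Rightarrow> nat \<Rightarrow> nat \<Rightarrow> real" where
  "nring l j g = (\<Prod>i\<in>{l+1..j}. real (P i) - 2) *
     (\<Prod>i\<in>{i. l+1 \<le> i \<and> i \<le> j \<and> P i dvd g}. (real (P i) - 1) / (real (P i) - 2))"

end

theory Submission
  imports Defs
begin

lemma P_prime: "prime (P i)"
  unfolding P_def using enumerate_in_set[OF primes_infinite] by simp

lemma P_ge2: "P i \<ge> 2"
  using P_prime prime_ge_2_nat by blast

lemma P_mono: "1 \<le> i \<Longrightarrow> i < j \<Longrightarrow> P i < P j"
  unfolding P_def using enumerate_mono[OF _ primes_infinite] by simp

lemma P_mono_le: "1 \<le> i \<Longrightarrow> i \<le> j \<Longrightarrow> P i \<le> P j"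
  using P_mono[of i j] by (cases "i = j") auto

lemma P_dvd_prim: "1 \<le> i \<Longrightarrow> i \<le> j \<Longrightarrow> P i dvd primorial j"
  unfolding primorial_def by (intro dvd_prodI) auto

lemma P_ndvd_prim: assumes "j < i" shows "\<not> P i dvd primorial j"
proof
  assume "P i dvd primorial j"
  then obtain t where t: "t \<in> {1..j}" "P i dvd P t"
    unfolding primorial_def using prime_dvd_prod_iff[OF _ P_prime] by blast
  then have "P i = P t" using primes_dvd_imp_eq P_prime by blast
  moreover have "P t < P i" using t assms P_mono by auto
  ultimately show False by simp
qed

lemma coprime_prim: 
  assumes "\<And>i. i \<in> {1..k} \<Longrightarrow> \<not> P i dvd x" shows "coprime x (primorial k)"
  unfolding primorial_def
proof (intro prod_coprime_right)
  fix i assume "i \<in> {1..k}"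
  then have "coprime (P i) x" using prime_imp_coprime[OF P_prime assms] by blast
  then show "coprime x (P i)" by (simp add: coprime_commute)
qed

lemma coprime_prim_D:
  assumes "coprime x (primorial k)" "1 \<le> i" "i \<le> k" shows "\<not> P i dvd x"
  using coprime_common_divisor[OF assms(1) _ P_dvd_prim[OF assms(2,3)]] P_prime[of i] not_prime_unit by blast

lemma card_le1:
  fixes p q c n :: nat
  assumes "prime p" "\<not> p dvd q" "n \<le> p"
  shows "card {v. v < n \<and> p dvd (c + v*q)} \<le> 1"
proof -
  have "x = y" if "x < n" "p dvd c + x*q" "y < n" "p dvd c + y*q" for x y
  proof -
    have *: "p dvd (y - x) * q" "p dvd (x - y) * q"
      using dvd_diff_nat[OF that(4) that(2)] dvd_diff_nat[OF that(2) that(4)]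
      by (simp_all add: diff_mult_distrib)
    then have "p dvd (y - x)" "p dvd (x - y)" using assms prime_dvd_mult_iff by blast+
    show ?thesis
    proof (cases "x \<le> y")
      case True
      have "y - x < p" using that assms by linarith
      then have "y - x = 0" using \<open>p dvd (y - x)\<close> dvd_imp_le by (metis not_gr0 not_le)
      then show ?thesis using True by simp
    next
      case False
      have "x - y < p" using that assms by linarith
      then have "x - y = 0" using \<open>p dvd (x - y)\<close> dvd_imp_le by (metis not_gr0 not_le)
      then show ?thesis using False by simp
    qed
  qed
  moreover have "finite {v. v < n \<and> p dvd (c + v*q)}" by simp
  ultimately show ?thesis by (subst One_nat_def, subst card_le_Suc0_iff_eq) blast+
qed


lemma dvd_shift: "(p::nat) dvd y \<Longrightarrow> p dvd x + y \<longleftrightarrow> p dvd x"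
  by (rule dvd_add_left_iff)

lemma card_Un_1: "card (A::'a set) \<le> 1 \<Longrightarrow> card B \<le> n \<Longrightarrow> card (A \<union> B) \<le> Suc n"
  using card_Un_le[of A B] by linarith

definition Fs :: "nat \<Rightarrow> nat \<Rightarrow> (nat \<Rightarrow> nat) set" where
  "Fs l j = {ms. (\<forall>i\<in>{l+1..j}. ms i < P i) \<and> (\<forall>i. i \<notin> {l+1..j} \<longrightarrow> ms i = 0)}"

definition Nf :: "nat \<Rightarrow> nat \<Rightarrow> (nat \<Rightarrow> nat) \<Rightarrow> nat" where
  "Nf l j ms = (\<Sum>i\<in>{l+1..j}. ms i * primorial (i - 1))"

definition G :: "nat \<Rightarrow> nat \<Rightarrow> nat \<Rightarrow> nat \<Rightarrow> (nat \<Rightarrow> nat) set" where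
  "G l g a j = {ms \<in> Fs l j. \<forall>i\<in>{l+1..j}. \<not> P i dvd (a + Nf l j ms) \<and> \<not> P i dvd (a + g + Nf l j ms)}"

definition nr :: "nat \<Rightarrow> nat \<Rightarrow> nat \<Rightarrow> real" where
  "nr l g j = (\<Prod>i\<in>{l+1..j}. if P i dvd g then real (P i) - 1 else real (P i) - 2)"

lemma finite_Fs: "finite (Fs l j)"
proof -
  have "Fs l j \<subseteq> {f. \<forall>x. (x \<in> {l+1..j} \<longrightarrow> f x \<in> {..P j}) \<and> (x \<notin> {l+1..j} \<longrightarrow> f x = 0)}"
  proof (intro subsetI CollectI allI conjI impI)
    fix f x assume f: "f \<in> Fs l j"
    { assume x: "x \<in> {l+1..j}"
      then have "f x < P x" using f unfolding Fs_def by auto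
      moreover have "P x \<le> P j" using x by (intro P_mono_le) auto
      ultimately show "f x \<in> {..P j}" by simp }
    { assume "x \<notin> {l+1..j}" then show "f x = 0" using f unfolding Fs_def by auto }
  qed
  then show ?thesis using finite_set_of_finite_funs[of "{l+1..j}" "{..P j}" 0]
    using finite_subset by blast
qed

lemma finite_G: "finite (G l g a j)"
  using finite_Fs unfolding G_def by simp

lemma nr_nonneg: "nr l g j \<ge> 0"
proof -
  have "Suc 0 \<le> P i" "2 \<le> P i" for i using P_ge2[of i] by linarith+
  then show ?thesis unfolding nr_def by (intro prod_nonneg) auto
qed

lemma nring_nr: assumes "1 \<le> l" shows "nring l j g = nr l g j"
proof -
  have fin: "finite {l+1..j}" by simp
  have eq: "{i. l+1 \<le> i \<and> i \<le> j \<and> P i dvd g} = {i \<in> {l+1..j}. P i dvd g}" by auto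
  have "nring l j g = (\<Prod>i\<in>{l+1..j}. real (P i) - 2) *
     (\<Prod>i\<in>{l+1..j}. if P i dvd g then (real (P i) - 1) / (real (P i) - 2) else 1)"
    unfolding nring_def eq prod.inter_filter[OF fin] ..
  also have "\<dots> = (\<Prod>i\<in>{l+1..j}. (real (P i) - 2) * (if P i dvd g then (real (P i) - 1) / (real (P i) - 2) else 1))"
    by (simp add: prod.distrib)
  also have "\<dots> = nr l g j"
    unfolding nr_def
  proof (intro prod.cong refl)
    fix i assume i: "i \<in> {l+1..j}"
    have "P 1 < P i" using i assms by (intro P_mono) auto
    then have "real (P i) - 2 \<noteq> 0" using P_ge2[of 1] by simp
    then show "(real (P i) - 2) * (if P i dvd g then (real (P i) - 1) / (real (P i) - 2) else 1) =
      (if P i dvd g then real (P i) - 1 else real (P i) - 2)" by simp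
  qed
  finally show ?thesis .
qed

lemma Nf_upd:
  assumes "f \<in> Fs l j" "l \<le> j"
  shows "Nf l (Suc j) (f(Suc j := v)) = Nf l j f + v * primorial j"
proof -
  have "{l+1..Suc j} = insert (Suc j) {l+1..j}" using assms by (intro atLeastAtMostSuc_conv) simp
  then have "Nf l (Suc j) (f(Suc j := v)) = v * primorial j + (\<Sum>i\<in>{l+1..j}. (f(Suc j := v)) i * primorial (i - 1))"
    unfolding Nf_def by simp
  also have "(\<Sum>i\<in>{l+1..j}. (f(Suc j := v)) i * primorial (i - 1)) = Nf l j f"
    unfolding Nf_def by (intro sum.cong) auto
  finally show ?thesis by (metis add.commute)
qed

lemma G_step:
  assumes "l \<le> j"
  shows "card (G l g a j) * (P (Suc j) - (if P (Suc j) dvd g then 1 else 2)) \<le> card (G l g a (Suc j))"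
proof -
  define p where "p = P (Suc j)"
  define q where "q = primorial j"
  define V where "V f = {v. v < p \<and> \<not> p dvd (a + Nf l j f + v*q) \<and> \<not> p dvd (a + g + Nf l j f + v*q)}" for f
  define c where "c = p - (if p dvd g then 1 else 2)"
  have pq: "\<not> p dvd q" unfolding p_def q_def by (intro P_ndvd_prim) simp
  have cardV: "c \<le> card (V f)" for f
  proof -
    define B1 where "B1 = {v. v < p \<and> p dvd (a + Nf l j f + v*q)}"
    define B2 where "B2 = {v. v < p \<and> p dvd (a + g + Nf l j f + v*q)}"
    have c1: "card B1 \<le> 1" unfolding B1_def using card_le1[OF _ pq] P_prime p_def by simp
    have c2: "card B2 \<le> 1" unfolding B2_def using card_le1[OF _ pq] P_prime p_def by simp
    have cU: "card (B1 \<union> B2) \<le> (if p dvd g then 1 else 2)"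
    proof (cases "p dvd g")
      case True
      have "B2 = B1" unfolding B1_def B2_def
      proof (intro Collect_cong conj_cong refl)
        fix v show "p dvd a + g + Nf l j f + v * q \<longleftrightarrow> p dvd a + Nf l j f + v * q"
          using dvd_shift[OF True, of "a + Nf l j f + v * q"] by (simp add: ac_simps)
      qed
      then show ?thesis using c1 True by simp
    next
      case False then show ?thesis using card_Un_le[of B1 B2] c1 c2 by simp
    qed
    have "V f = {..<p} - (B1 \<union> B2)" unfolding V_def B1_def B2_def by auto
    then have "card (V f) = p - card (B1 \<union> B2)"
      by (simp add: card_Diff_subset B1_def B2_def subset_iff)
    then show ?thesis unfolding c_def using cU by linarith
  qed
  define \<phi> where "\<phi> = (\<lambda>(f, v). f(Suc j := (v::nat)))"
  have fin: "finite (Sigma (G l g a j) V)"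
    using finite_G unfolding V_def by (intro finite_SigmaI) auto
  have inj: "inj_on \<phi> (Sigma (G l g a j) V)"
  proof (rule inj_onI)
    fix x y assume x: "x \<in> Sigma (G l g a j) V" and y: "y \<in> Sigma (G l g a j) V" and e: "\<phi> x = \<phi> y"
    obtain f v where xf: "x = (f, v)" by fastforce
    obtain f' v' where yf: "y = (f', v')" by fastforce
    have f0: "f (Suc j) = 0" "f' (Suc j) = 0" using x y xf yf unfolding G_def Fs_def by auto
    have e': "f(Suc j := v) = f'(Suc j := v')" using e xf yf unfolding \<phi>_def by simp
    then have "v = v'" by (metis fun_upd_same)
    moreover have "f = f'"
    proof
      fix i show "f i = f' i"
        using fun_cong[OF e', of i] f0 by (cases "i = Suc j") auto
    qed
    ultimately show "x = y" using xf yf by simp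
  qed
  have sub: "\<phi> ` Sigma (G l g a j) V \<subseteq> G l g a (Suc j)"
  proof
    fix y assume "y \<in> \<phi> ` Sigma (G l g a j) V"
    then obtain f v where f: "f \<in> G l g a j" and v: "v \<in> V f" and y: "y = f(Suc j := v)"
      unfolding \<phi>_def by auto
    have fF: "f \<in> Fs l j" using f unfolding G_def by simp
    have NN: "Nf l (Suc j) y = Nf l j f + v * q" using Nf_upd[OF fF assms] y q_def by simp
    have yF: "y \<in> Fs l (Suc j)"
      using fF v y assms unfolding Fs_def V_def p_def by (auto simp: le_Suc_eq)
    have "\<not> P i dvd (a + Nf l (Suc j) y) \<and> \<not> P i dvd (a + g + Nf l (Suc j) y)" if i: "i \<in> {l+1..Suc j}" for i
    proof (cases "i = Suc j")
      case True
      then show ?thesis using v NN unfolding V_def p_def by (simp add: ac_simps)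
    next
      case False
      then have i': "i \<in> {l+1..j}" using i by auto
      have d: "P i dvd v * q" unfolding q_def using i' by (intro dvd_mult P_dvd_prim) auto
      have "\<not> P i dvd (a + Nf l j f) \<and> \<not> P i dvd (a + g + Nf l j f)" using f i' unfolding G_def by auto
      then show ?thesis unfolding NN using dvd_shift[OF d, of "a + Nf l j f"] dvd_shift[OF d, of "a + g + Nf l j f"]
        by (simp add: ac_simps)
    qed
    then show "y \<in> G l g a (Suc j)" unfolding G_def using yF by auto
  qed
  have "card (G l g a j) * c = (\<Sum>f\<in>G l g a j. c)" by simp
  also have "\<dots> \<le> (\<Sum>f\<in>G l g a j. card (V f))" by (intro sum_mono cardV)
  also have "\<dots> = card (Sigma (G l g a j) V)"
    using finite_G unfolding V_def by (intro card_SigmaI[symmetric]) auto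
  also have "\<dots> = card (\<phi> ` Sigma (G l g a j) V)" using card_image[OF inj] by simp
  also have "\<dots> \<le> card (G l g a (Suc j))" by (intro card_mono finite_G sub)
  finally show ?thesis unfolding c_def p_def .
qed

lemma G_card:
  assumes "l \<le> j"
  shows "nr l g j \<le> real (card (G l g a j))"
  using assms
proof (induct j rule: dec_induct)
  case base
  have "(\<lambda>_. 0) \<in> G l g a l" unfolding G_def Fs_def by auto
  then have "card (G l g a l) \<ge> 1" using finite_G
    by (metis One_nat_def Suc_leI card_gt_0_iff empty_iff)
  moreover have "nr l g l = 1" unfolding nr_def by simp
  ultimately show ?case by simp
next
  case (step n)
  define p where "p = P (Suc n)"
  have p2: "p \<ge> 2" unfolding p_def using P_ge2 .
  have "{l+1..Suc n} = insert (Suc n) {l+1..n}" using step by (intro atLeastAtMostSuc_conv) simp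
  then have nrS: "nr l g (Suc n) = (if p dvd g then real p - 1 else real p - 2) * nr l g n"
    unfolding nr_def p_def by simp
  have ceq: "real (p - (if p dvd g then 1 else 2)) = (if p dvd g then real p - 1 else real p - 2)"
    using p2 by auto
  have "nr l g (Suc n) \<le> real (p - (if p dvd g then 1 else 2)) * real (card (G l g a n))"
    unfolding nrS ceq using step(3) p2 by (intro mult_left_mono) auto
  also have "\<dots> = real (card (G l g a n) * (p - (if p dvd g then 1 else 2)))" by simp
  also have "\<dots> \<le> real (card (G l g a (Suc n)))"
    using G_step[OF step(1), of g a] unfolding p_def by linarith
  finally show ?case .
qed


theorem lemma6:
  fixes g l a k m m' :: nat
  assumes "0 < g" and "1 \<le> l" and "cons_pair l g a"
    and "k > l + 4" and "m \<le> P (k - 1) - 1" and "m' \<le> P k - 1"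
  shows "real (card {ms :: nat \<Rightarrow> nat.
            (\<forall>j\<in>{l+1..k}. ms j \<le> P j - 1) \<and> (\<forall>j. j \<notin> {l+1..k} \<longrightarrow> ms j = 0) \<and>
            ms (k - 1) = m \<and> ms k = m' \<and>
            coprime (a + (\<Sum>j\<in>{l+1..k}. ms j * primorial (j - 1))) (primorial k) \<and>
            coprime (a + g + (\<Sum>j\<in>{l+1..k}. ms j * primorial (j - 1))) (primorial k)})
         \<ge> (real (P (k - 2)) - 6) * nring l (k - 3) g"
  (is "real (card ?T) \<ge> _")
proof -
  define j0 where "j0 = k - 3"
  have kk: "k = Suc (Suc (Suc j0))" and lj: "l + 2 \<le> j0" using assms(4) unfolding j0_def by auto
  have e1: "k - 1 = Suc (Suc j0)" and e2: "k - 2 = Suc j0" and e3: "k - 3 = j0" using kk by auto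
  have ca: "coprime a (primorial l)" "coprime (a + g) (primorial l)"
    using assms(3) unfolding cons_pair_def prospective_prime_def by auto
  define q where "q = primorial j0"
  define p0 where "p0 = P (Suc j0)"
  define M2 where "M2 = m * primorial (Suc j0) + m' * primorial (Suc (Suc j0))"
  define S where "S f v = Nf l j0 f + v * q + M2" for f v
  define I3 where "I3 = {Suc j0, Suc (Suc j0), k}"
  define W where "W f = {v. v < p0 \<and> (\<forall>i\<in>I3. \<not> P i dvd (a + S f v) \<and> \<not> P i dvd (a + g + S f v))}" for f
  define \<phi> where "\<phi> = (\<lambda>(f, v). f(Suc j0 := (v::nat), Suc (Suc j0) := m, k := m'))"
  have I3: "i \<in> I3 \<Longrightarrow> j0 < i \<and> Suc j0 \<le> i" for i unfolding I3_def kk by auto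

  have cardW: "p0 - 6 \<le> card (W f)" for f
  proof -
    define B where "B i h = {v. v < p0 \<and> P i dvd ((a + h + Nf l j0 f + M2) + v*q)}" for i h
    have cB: "card (B i h) \<le> 1" if "i \<in> I3" for i h
      unfolding B_def
    proof (rule card_le1)
      show "prime (P i)" by (rule P_prime)
      show "\<not> P i dvd q" unfolding q_def using I3[OF that] by (intro P_ndvd_prim) simp
      show "p0 \<le> P i" unfolding p0_def using I3[OF that] by (intro P_mono_le) auto
    qed
    define U where "U = B (Suc j0) 0 \<union> (B (Suc j0) g \<union> (B (Suc (Suc j0)) 0 \<union> (B (Suc (Suc j0)) g \<union> (B k 0 \<union> B k g))))"
    have cB': "card (B i h) \<le> Suc 0" if "i \<in> I3" for i h using cB[OF that] by simp
    have "card U \<le> Suc (Suc (Suc (Suc (Suc (Suc 0)))))" unfolding U_def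
      by (intro card_Un_1 cB cB') (auto simp: I3_def)
    then have cU: "card U \<le> 6" by simp
    have Usub: "U \<subseteq> {..<p0}" unfolding U_def B_def by auto
    have ar: "a + S f v = a + 0 + Nf l j0 f + M2 + v*q" "a + g + S f v = a + g + Nf l j0 f + M2 + v*q" for v
      unfolding S_def by simp_all
    have "{..<p0} - U \<subseteq> W f"
    proof
      fix v assume v: "v \<in> {..<p0} - U"
      then have "\<not> P i dvd (a + h + Nf l j0 f + M2) + v*q" if "i \<in> I3" "h \<in> {0, g}" for i h
        using that unfolding U_def B_def I3_def by auto
      note h = this
      have "\<not> P i dvd (a + S f v) \<and> \<not> P i dvd (a + g + S f v)" if "i \<in> I3" for i
        using h[OF that, of 0] h[OF that, of g] ar(1)[of v] ar(2)[of v] by (simp add: add.assoc)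
      then show "v \<in> W f" unfolding W_def using v by auto
    qed
    then have "card ({..<p0} - U) \<le> card (W f)"
      by (intro card_mono) (auto simp: W_def)
    moreover have "card ({..<p0} - U) = p0 - card U" using Usub by (simp add: card_Diff_subset finite_subset)
    ultimately show ?thesis using cU by linarith
  qed

  have sumeq: "(\<Sum>i\<in>{l+1..k}. (\<phi> (f, v)) i * primorial (i - 1)) = S f v" if f: "f \<in> Fs l j0" for f v
  proof -
    define h where "h i = (\<phi> (f, v)) i * primorial (i - 1)" for i
    have "{l+1..k} = insert k (insert (Suc (Suc j0)) (insert (Suc j0) {l+1..j0}))"
      unfolding kk using lj by auto
    then have "(\<Sum>i\<in>{l+1..k}. h i) = h k + (h (Suc (Suc j0)) + (h (Suc j0) + (\<Sum>i\<in>{l+1..j0}. h i)))"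
      using kk by simp
    also have "(\<Sum>i\<in>{l+1..j0}. h i) = Nf l j0 f" unfolding h_def Nf_def \<phi>_def kk
      by (intro sum.cong) auto
    finally show ?thesis unfolding h_def S_def M2_def q_def \<phi>_def kk by simp
  qed

  have good: "\<not> P i dvd (a + S f v) \<and> \<not> P i dvd (a + g + S f v)"
    if f: "f \<in> G l g a j0" and v: "v \<in> W f" and i: "i \<in> {1..k}" for f v i
  proof -
    have fF: "f \<in> Fs l j0" using f unfolding G_def by simp
    consider "i \<le> l" | "l + 1 \<le> i \<and> i \<le> j0" | "i \<in> I3" using i unfolding I3_def kk by force
    then show ?thesis
    proof cases
      case 1
      have "P i dvd (\<Sum>i'\<in>{l+1..k}. (\<phi> (f, v)) i' * primorial (i' - 1))"
        using 1 i by (intro dvd_sum dvd_mult P_dvd_prim) auto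
      then have d: "P i dvd S f v" using sumeq[OF fF] by simp
      have "\<not> P i dvd a" "\<not> P i dvd (a + g)" using coprime_prim_D[OF ca(1)] coprime_prim_D[OF ca(2)] 1 i by auto
      then show ?thesis using dvd_shift[OF d, of a] dvd_shift[OF d, of "a + g"] by simp
    next
      case 2
      have d: "P i dvd v * q + M2" unfolding q_def M2_def using 2 i
        by (intro dvd_add dvd_mult P_dvd_prim) auto
      have "\<not> P i dvd (a + Nf l j0 f) \<and> \<not> P i dvd (a + g + Nf l j0 f)" using f 2 unfolding G_def by auto
      moreover have "a + S f v = (a + Nf l j0 f) + (v * q + M2)" "a + g + S f v = (a + g + Nf l j0 f) + (v * q + M2)"
        unfolding S_def by simp_all
      ultimately show ?thesis using dvd_shift[OF d, of "a + Nf l j0 f"] dvd_shift[OF d, of "a + g + Nf l j0 f"] by (simp add: add.assoc)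
    next
      case 3
      then show ?thesis using v unfolding W_def by auto
    qed
  qed

  have fin: "finite (Sigma (G l g a j0) W)"
    using finite_G unfolding W_def by (intro finite_SigmaI) auto
  have inj: "inj_on \<phi> (Sigma (G l g a j0) W)"
  proof (rule inj_onI)
    fix x y assume x: "x \<in> Sigma (G l g a j0) W" and y: "y \<in> Sigma (G l g a j0) W" and e: "\<phi> x = \<phi> y"
    obtain f v where xf: "x = (f, v)" by fastforce
    obtain f' v' where yf: "y = (f', v')" by fastforce
    have f0: "\<And>i. i > j0 \<Longrightarrow> f i = 0" "\<And>i. i > j0 \<Longrightarrow> f' i = 0"
      using x y xf yf unfolding G_def Fs_def by auto
    have e': "f(Suc j0 := v, Suc (Suc j0) := m, k := m') = f'(Suc j0 := v', Suc (Suc j0) := m, k := m')"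
      using e xf yf unfolding \<phi>_def by simp
    have "v = v'" using fun_cong[OF e', of "Suc j0"] kk by simp
    moreover have "f = f'"
    proof
      fix i show "f i = f' i"
        using fun_cong[OF e', of i] f0[of i] kk by (cases "i > j0") auto
    qed
    ultimately show "x = y" using xf yf by simp
  qed
  have sub: "\<phi> ` Sigma (G l g a j0) W \<subseteq> ?T"
  proof
    fix y assume "y \<in> \<phi> ` Sigma (G l g a j0) W"
    then obtain f v where f: "f \<in> G l g a j0" and v: "v \<in> W f" and y: "y = \<phi> (f, v)"
      by auto
    have fF: "f \<in> Fs l j0" using f unfolding G_def by simp
    have yv: "y = f(Suc j0 := v, Suc (Suc j0) := m, k := m')" using y unfolding \<phi>_def by simp
    have c1: "\<forall>j\<in>{l+1..k}. y j \<le> P j - 1"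
    proof
      fix j assume j: "j \<in> {l+1..k}"
      consider "j = k" | "j = Suc (Suc j0)" | "j = Suc j0" | "j \<le> j0" using j kk by (simp, linarith)
      then show "y j \<le> P j - 1"
      proof cases
        case 1 then show ?thesis using assms(6) yv by simp
      next
        case 2 then show ?thesis using assms(5) yv e1 kk by simp
      next
        case 3
        have "v < P (Suc j0)" using v unfolding W_def p0_def by simp
        then show ?thesis using 3 yv kk by simp
      next
        case 4
        then have "f j < P j" using fF j unfolding Fs_def by auto
        then show ?thesis using 4 yv kk by simp
      qed
    qed
    have c2: "\<forall>j. j \<notin> {l+1..k} \<longrightarrow> y j = 0"
      using fF yv kk lj unfolding Fs_def by auto
    have c3: "y (k - 1) = m" "y k = m'" using yv e1 kk by auto
    have sy: "(\<Sum>j\<in>{l+1..k}. y j * primorial (j - 1)) = S f v" using sumeq[OF fF] y by simp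
    have c4: "coprime (a + (\<Sum>j\<in>{l+1..k}. y j * primorial (j - 1))) (primorial k)"
      unfolding sy using good[OF f v] by (intro coprime_prim) blast
    have c5: "coprime (a + g + (\<Sum>j\<in>{l+1..k}. y j * primorial (j - 1))) (primorial k)"
      unfolding sy using good[OF f v] by (intro coprime_prim) blast
    show "y \<in> ?T" using c1 c2 c3 c4 c5 by blast
  qed
  have finT: "finite ?T"
  proof -
    have "?T \<subseteq> {f. \<forall>x. (x \<in> {l+1..k} \<longrightarrow> f x \<in> {..P k}) \<and> (x \<notin> {l+1..k} \<longrightarrow> f x = 0)}"
    proof (intro subsetI CollectI allI conjI impI)
      fix f x assume f: "f \<in> ?T"
      { assume x: "x \<in> {l+1..k}"
        then have "f x \<le> P x - 1" using f by auto
        moreover have "P x \<le> P k" using x by (intro P_mono_le) auto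
        ultimately show "f x \<in> {..P k}" by simp }
      { assume "x \<notin> {l+1..k}" then show "f x = 0" using f by auto }
    qed
    then show ?thesis using finite_set_of_finite_funs[of "{l+1..k}" "{..P k}" 0]
      using finite_subset by blast
  qed
  have main: "card (G l g a j0) * (p0 - 6) \<le> card ?T"
  proof -
    have "card (G l g a j0) * (p0 - 6) = (\<Sum>f\<in>G l g a j0. p0 - 6)" by simp
    also have "\<dots> \<le> (\<Sum>f\<in>G l g a j0. card (W f))" by (intro sum_mono cardW)
    also have "\<dots> = card (Sigma (G l g a j0) W)"
      using finite_G unfolding W_def by (intro card_SigmaI[symmetric]) auto
    also have "\<dots> = card (\<phi> ` Sigma (G l g a j0) W)" using card_image[OF inj] by simp
    also have "\<dots> \<le> card ?T" by (intro card_mono finT sub)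
    finally show ?thesis .
  qed
  have nn: "nring l (k - 3) g = nr l g j0" using nring_nr[OF assms(2)] e3 by simp
  have nrG: "nr l g j0 \<le> real (card (G l g a j0))" using G_card lj by simp
  show ?thesis
  proof (cases "p0 < 6")
    case True
    then have "(real (P (k - 2)) - 6) * nring l (k - 3) g \<le> 0"
      unfolding nn e2 p0_def using nr_nonneg[of l g j0] by (intro mult_nonpos_nonneg) auto
    then show ?thesis by simp
  next
    case False
    have "(real (P (k - 2)) - 6) * nring l (k - 3) g = nr l g j0 * real (p0 - 6)"
      unfolding nn e2 p0_def using False p0_def by simp
    also have "\<dots> \<le> real (card (G l g a j0)) * real (p0 - 6)"
      using nrG by (intro mult_right_mono) auto
    also have "\<dots> = real (card (G l g a j0) * (p0 - 6))" by simp
    also have "\<dots> \<le> real (card ?T)" using main by (simp only: of_nat_le_iff)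
    finally show ?thesis .
  qed
qed

end
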